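(* Fix a nonempty closed interval $I_\Lambda\subseteq[\Lambda_{\min},\Lambda_{\max}]$ with $0<\Lambda_{\min}\le\Lambda_{\max}$, and a set $\mathcal{P}=\{q\in\Delta_m:\ \|q-\hat p\|_1\le\varepsilon\}$ for some $\hat p\in\Delta_m$ and $\varepsilon\ge 0$, where $\Delta_m$ is the set of probability vectors on $\{1,\dots,m\}$. Let $\mathcal{C}$ be the set of admission-control CTMDPs $\mathcal{M}_{\Lambda,p(\cdot)}$ with $\Lambda\in I_\Lambda$ and $p(s)\in\mathcal{P}$ for every $s\in\{0,\dots,S\}$. Let $\widetilde{\mathcal{M}}=\mathcal{M}_{\tilde\Lambda,\tilde p(\cdot)}$, where $\tilde\Lambda=\max I_\Lambda$ and, for each state $s$, $\tilde p(s)$ is the lexicographic maximizer over $\mathcal{P}$ of the vector $(q^{(\sigma_s(1))},q^{(\sigma_s(2))},\dots,q^{(\sigma_s(m))})$, with $\sigma_s$ an ordering of the classes by non-increasing $r^{(i)}(s)$ (i.e. $\tilde p(s)$ first maximizes the probability of the highest-priority class in state $s$, then, subject to that, of the second, etc.). Then $\widetilde{\mathcal{M}}\in\mathcal{C}$ and its optimal long-run average reward is at least the optimal long-run average reward of every CTMDP in $\mathcal{C}$.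
   Context: Admission control to an $M/M/c/S$ queue: states $s\in\{0,1,\dots,S\}$ = number of jobs in the system; $c\ge1$ identical servers each of rate $\mu>0$, total service rate $\mu(s)=\min(s,c)\mu$ in state $s$. There are $m$ job classes; each class $i$ has a known expected reward $r^{(i)}(s)\in\mathbb{R}$ for admitting it in state $s$. For $\Lambda>0$ and probability vectors $p(s)=(p^{(1)}(s),\dots,p^{(m)}(s))$, the CTMDP $\mathcal{M}_{\Lambda,p(\cdot)}$ is the one where, in state $s$, class-$i$ jobs arrive as a Poisson stream of rate $\lambda^{(i)}(s)=\Lambda p^{(i)}(s)$; an action in state $s<S$ is a subset $a\subseteq\{1,\dots,m\}$ of classes to admit (in state $S$ nothing is admitted); under action $a$ the birth rate is $\sum_{i\in a}\lambda^{(i)}(s)$, the death rate is $\mu(s)$, and the reward rate is $\sum_{i\in a}\lambda^{(i)}(s)r^{(i)}(s)$. The long-run average reward of a stationary policy $\pi$ is $\rho^\pi=\lim_{T\to\infty}\frac1T\mathbb{E}\int_0^T R^\pi(s_t)\,dt$ with $R^\pi(s)$ the reward rate of the chosen action in state $s$; the optimal average reward is the supremum over stationary (possibly randomized) policies. *)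

theory Defs
  imports "HOL-Analysis.Analysis"
begin

text \<open>Admission control to an M/M/c/S queue. States are 0..S, job classes are 1..m.
  Rewards: r i s = expected reward for admitting a class-i job in state s.
  A CTMDP M(Lam, p) is given by Lam > 0 and p :: nat => nat => real,
  where p s i is the probability of class i in state s.
  A stationary randomized policy d assigns to each state s < S a probability
  distribution d s over actions, i.e. subsets of {1..m}.\<close>

definition prob_vec :: "nat \<Rightarrow> (nat \<Rightarrow> real) \<Rightarrow> bool" where
  "prob_vec m q \<longleftrightarrow> (\<forall>i\<in>{1..m}. 0 \<le> q i) \<and> (\<Sum>i=1..m. q i) = 1"

definition ball_set :: "nat \<Rightarrow> (nat \<Rightarrow> real) \<Rightarrow> real \<Rightarrow> (nat \<Rightarrow> real) set" where
  "ball_set m phat eps = {q. prob_vec m q \<and> (\<Sum>i=1..m. \<bar>q i - phat i\<bar>) \<le> eps}"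

definition valid_policy :: "nat \<Rightarrow> nat \<Rightarrow> (nat \<Rightarrow> nat set \<Rightarrow> real) \<Rightarrow> bool" where
  "valid_policy m S d \<longleftrightarrow>
     (\<forall>s<S. (\<forall>a. 0 \<le> d s a) \<and> (\<forall>a. d s a \<noteq> 0 \<longrightarrow> a \<subseteq> {1..m})
            \<and> (\<Sum>a\<in>Pow {1..m}. d s a) = 1)"

definition birth_rate :: "nat \<Rightarrow> nat \<Rightarrow> real \<Rightarrow> (nat \<Rightarrow> nat \<Rightarrow> real)
    \<Rightarrow> (nat \<Rightarrow> nat set \<Rightarrow> real) \<Rightarrow> nat \<Rightarrow> real" where
  "birth_rate m S Lam p d s =
     (if s < S then (\<Sum>a\<in>Pow {1..m}. d s a * (\<Sum>i\<in>a. Lam * p s i)) else 0)"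

definition death_rate :: "nat \<Rightarrow> real \<Rightarrow> nat \<Rightarrow> real" where
  "death_rate c mu s = real (min s c) * mu"

definition reward_rate :: "nat \<Rightarrow> nat \<Rightarrow> (nat \<Rightarrow> nat \<Rightarrow> real) \<Rightarrow> real \<Rightarrow> (nat \<Rightarrow> nat \<Rightarrow> real)
    \<Rightarrow> (nat \<Rightarrow> nat set \<Rightarrow> real) \<Rightarrow> nat \<Rightarrow> real" where
  "reward_rate m S r Lam p d s =
     (if s < S then (\<Sum>a\<in>Pow {1..m}. d s a * (\<Sum>i\<in>a. Lam * p s i * r i s)) else 0)"

definition generator :: "nat \<Rightarrow> nat \<Rightarrow> nat \<Rightarrow> real \<Rightarrow> real \<Rightarrow> (nat \<Rightarrow> nat \<Rightarrow> real)
    \<Rightarrow> (nat \<Rightarrow> nat set \<Rightarrow> real) \<Rightarrow> nat \<Rightarrow> nat \<Rightarrow> real" where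
  "generator m S c mu Lam p d i j =
     (if j = Suc i then birth_rate m S Lam p d i else 0)
   + (if Suc j = i then death_rate c mu i else 0)
   - (if j = i then birth_rate m S Lam p d i + death_rate c mu i else 0)"

fun mat_pow :: "nat \<Rightarrow> (nat \<Rightarrow> nat \<Rightarrow> real) \<Rightarrow> nat \<Rightarrow> nat \<Rightarrow> nat \<Rightarrow> real" where
  "mat_pow S Q 0 i j = (if i = j then 1 else 0)"
| "mat_pow S Q (Suc n) i j = (\<Sum>k\<le>S. mat_pow S Q n i k * Q k j)"

definition trans_prob :: "nat \<Rightarrow> (nat \<Rightarrow> nat \<Rightarrow> real) \<Rightarrow> real \<Rightarrow> nat \<Rightarrow> nat \<Rightarrow> real" where
  "trans_prob S Q t i j = (\<Sum>n. t ^ n / fact n * mat_pow S Q n i j)"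

definition avg_reward :: "nat \<Rightarrow> nat \<Rightarrow> nat \<Rightarrow> real \<Rightarrow> (nat \<Rightarrow> nat \<Rightarrow> real) \<Rightarrow> real
    \<Rightarrow> (nat \<Rightarrow> nat \<Rightarrow> real) \<Rightarrow> (nat \<Rightarrow> nat set \<Rightarrow> real) \<Rightarrow> nat \<Rightarrow> real" where
  "avg_reward m S c mu r Lam p d s0 =
     Lim at_top (\<lambda>T. (1 / T) * integral {0..T}
        (\<lambda>t. \<Sum>j\<le>S. trans_prob S (generator m S c mu Lam p d) t s0 j
                       * reward_rate m S r Lam p d j))"

definition opt_reward :: "nat \<Rightarrow> nat \<Rightarrow> nat \<Rightarrow> real \<Rightarrow> (nat \<Rightarrow> nat \<Rightarrow> real) \<Rightarrow> real
    \<Rightarrow> (nat \<Rightarrow> nat \<Rightarrow> real) \<Rightarrow> nat \<Rightarrow> real" where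
  "opt_reward m S c mu r Lam p s0 =
     (SUP d\<in>{d. valid_policy m S d}. avg_reward m S c mu r Lam p d s0)"

definition in_class :: "nat \<Rightarrow> nat \<Rightarrow> real set \<Rightarrow> (nat \<Rightarrow> real) set \<Rightarrow> real
    \<Rightarrow> (nat \<Rightarrow> nat \<Rightarrow> real) \<Rightarrow> bool" where
  "in_class m S I P Lam p \<longleftrightarrow> Lam \<in> I \<and> (\<forall>s\<le>S. p s \<in> P)"

definition lex_le :: "real list \<Rightarrow> real list \<Rightarrow> bool" where
  "lex_le xs ys \<longleftrightarrow> xs = ys \<or>
     (\<exists>k < length xs. take k xs = take k ys \<and> xs ! k < ys ! k)"

definition prio_vec :: "nat \<Rightarrow> (nat \<Rightarrow> nat) \<Rightarrow> (nat \<Rightarrow> real) \<Rightarrow> real list" where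
  "prio_vec m sg q = map (\<lambda>k. q (sg k)) [1..<m+1]"

definition lex_maximizer :: "nat \<Rightarrow> (nat \<Rightarrow> real) set \<Rightarrow> (nat \<Rightarrow> nat) \<Rightarrow> (nat \<Rightarrow> real) \<Rightarrow> bool" where
  "lex_maximizer m P sg q \<longleftrightarrow> q \<in> P \<and> (\<forall>q'\<in>P. lex_le (prio_vec m sg q') (prio_vec m sg q))"

definition p_tilde :: "nat \<Rightarrow> (nat \<Rightarrow> real) set \<Rightarrow> (nat \<Rightarrow> nat \<Rightarrow> nat) \<Rightarrow> nat \<Rightarrow> nat \<Rightarrow> real" where
  "p_tilde m P ord s = (SOME q. lex_maximizer m P (ord s) q)"

end

theory Submission
  imports Defs
begin

lemma mat_pow_bound:
  fixes M :: "nat \<Rightarrow> nat \<Rightarrow> real" and S :: nat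
  defines "C \<equiv> 1 + (\<Sum>k\<le>S. \<Sum>j\<le>S. \<bar>M k j\<bar>)"
  shows "j \<le> S \<Longrightarrow> \<bar>mat_pow S M n i j\<bar> \<le> C ^ n"
proof (induction n arbitrary: j)
  case 0 then show ?case by simp
next
  case (Suc n)
  have C0: "0 \<le> C" unfolding C_def by (simp add: sum_nonneg add_nonneg_nonneg)
  have colj: "(\<Sum>k\<le>S. \<bar>M k j\<bar>) \<le> C"
  proof -
    have "(\<Sum>k\<le>S. \<bar>M k j\<bar>) \<le> (\<Sum>k\<le>S. \<Sum>j\<le>S. \<bar>M k j\<bar>)"
      by (rule sum_mono) (rule member_le_sum[where f="\<lambda>j. \<bar>M _ j\<bar>"], use Suc.prems in auto)
    then show ?thesis unfolding C_def by simp
  qed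
  have "\<bar>mat_pow S M (Suc n) i j\<bar> \<le> (\<Sum>k\<le>S. \<bar>mat_pow S M n i k\<bar> * \<bar>M k j\<bar>)"
    by (simp add: abs_mult[symmetric] sum_abs)
  also have "\<dots> \<le> (\<Sum>k\<le>S. C ^ n * \<bar>M k j\<bar>)"
    by (rule sum_mono, rule mult_right_mono, auto intro: Suc.IH)
  also have "\<dots> = C ^ n * (\<Sum>k\<le>S. \<bar>M k j\<bar>)" by (simp add: sum_distrib_left)
  also have "\<dots> \<le> C ^ n * C" by (rule mult_left_mono[OF colj], simp add: C0)
  finally show ?case by (simp add: mult.commute)
qed

lemma tp_summable:
  fixes M :: "nat \<Rightarrow> nat \<Rightarrow> real"
  assumes "j \<le> S"
  shows "summable (\<lambda>n. mat_pow S M n i j / fact n * y ^ n)"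
proof -
  define C where "C = 1 + (\<Sum>k\<le>S. \<Sum>j\<le>S. \<bar>M k j\<bar>)"
  have "summable (\<lambda>n. inverse (fact n) * (C * \<bar>y\<bar>)^n)" by (rule summable_exp)
  moreover have "norm (mat_pow S M n i j / fact n * y ^ n) \<le> inverse (fact n) * (C * \<bar>y\<bar>)^n" for n
  proof -
    have "norm (mat_pow S M n i j / fact n * y ^ n) = \<bar>mat_pow S M n i j\<bar> * \<bar>y\<bar>^n * inverse (fact n)"
      by (simp add: abs_mult power_abs divide_inverse)
    also have "\<dots> \<le> C^n * \<bar>y\<bar>^n * inverse (fact n)"
      by (intro mult_right_mono mat_pow_bound[OF assms, of M n i, folded C_def]) auto
    finally show ?thesis by (simp add: power_mult_distrib mult.commute)
  qed
  ultimately show ?thesis by (rule summable_comparison_test'[where N=0]) 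
qed

lemma tp_eq: "trans_prob S M t i j = (\<Sum>n. mat_pow S M n i j / fact n * t ^ n)"
  unfolding trans_prob_def by (simp add: field_simps)

lemma tp_zero: "trans_prob S M 0 i j = (if i = j then 1 else 0)"
  unfolding tp_eq by (subst powser_zero) simp

lemma tp_deriv:
  fixes M :: "nat \<Rightarrow> nat \<Rightarrow> real"
  assumes "j \<le> S"
  shows "((\<lambda>t. trans_prob S M t i j) has_real_derivative
           (\<Sum>k\<le>S. trans_prob S M t i k * M k j)) (at t)"
proof -
  have d: "((\<lambda>t. \<Sum>n. mat_pow S M n i j / fact n * t ^ n) has_field_derivative
           (\<Sum>n. diffs (\<lambda>n. mat_pow S M n i j / fact n) n * t^n)) (at t)"
    by (rule termdiffs_strong_converges_everywhere) (rule tp_summable[OF assms])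
  have "diffs (\<lambda>n. mat_pow S M n i j / fact n) n * t^n
        = (\<Sum>k\<le>S. mat_pow S M n i k / fact n * t ^ n * M k j)" for n
  proof -
    have f: "real (Suc n) / fact (Suc n) = 1 / fact n"
      by (simp add: divide_simps del: of_nat_Suc)
    have "diffs (\<lambda>n. mat_pow S M n i j / fact n) n = mat_pow S M (Suc n) i j * (real (Suc n) / fact (Suc n))"
      by (simp add: diffs_def)
    also have "\<dots> = mat_pow S M (Suc n) i j / fact n" by (simp only: f) simp
    finally show ?thesis
      by (simp add: sum_distrib_left sum_distrib_right sum_divide_distrib field_simps)
  qed
  then have "(\<Sum>n. diffs (\<lambda>n. mat_pow S M n i j / fact n) n * t^n)
        = (\<Sum>n. \<Sum>k\<le>S. mat_pow S M n i k / fact n * t ^ n * M k j)" by simp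
  also have "\<dots> = (\<Sum>k\<le>S. \<Sum>n. mat_pow S M n i k / fact n * t ^ n * M k j)"
    by (rule suminf_sum) (rule summable_mult2, rule tp_summable, simp)
  also have "\<dots> = (\<Sum>k\<le>S. trans_prob S M t i k * M k j)"
    unfolding tp_eq by (rule sum.cong[OF refl], rule suminf_mult2[symmetric], rule tp_summable, simp)
  finally show ?thesis using d unfolding tp_eq by simp
qed

lemma tp_nonneg_pos:
  fixes M :: "nat \<Rightarrow> nat \<Rightarrow> real"
  assumes "\<forall>k\<le>S. \<forall>j\<le>S. 0 \<le> M k j" "j \<le> S" "0 \<le> t"
  shows "0 \<le> trans_prob S M t i j"
proof -
  have "0 \<le> mat_pow S M n i j" if "j \<le> S" for n j
    using that by (induction n arbitrary: j) (auto intro!: sum_nonneg mult_nonneg_nonneg simp: assms(1))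
  then show ?thesis unfolding tp_eq using assms
    by (intro suminf_nonneg tp_summable) auto
qed

lemma ode_unique:
  fixes z :: "real \<Rightarrow> nat \<Rightarrow> real" and A :: "nat \<Rightarrow> nat \<Rightarrow> real"
  assumes d: "\<And>j t. j \<le> S \<Longrightarrow> ((\<lambda>t. z t j) has_real_derivative (\<Sum>k\<le>S. z t k * A k j)) (at t)"
    and z0: "\<And>j. j \<le> S \<Longrightarrow> z 0 j = 0" and t: "0 \<le> t" and j: "j \<le> S"
  shows "z t j = 0"
proof -
  define K where "K = (\<Sum>k\<le>S. \<Sum>j\<le>S. \<bar>A k j\<bar>)"
  define E where "E t = (\<Sum>j\<le>S. (z t j)^2)" for t
  define E' where "E' t = (\<Sum>j\<le>S. 2 * z t j * (\<Sum>k\<le>S. z t k * A k j))" for t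
  have K0: "0 \<le> K" unfolding K_def by (simp add: sum_nonneg)
  have dE: "(E has_real_derivative E' x) (at x)" for x
    unfolding E_def E'_def
    by (rule DERIV_sum, rule DERIV_cong[OF DERIV_power[OF d, where n=2]]) auto
  have Ebd: "E' x \<le> 2 * K * E x" for x
  proof -
    have zsq: "(z x j)^2 \<le> E x" if "j \<le> S" for j
      unfolding E_def by (rule member_le_sum[where f="\<lambda>j. (z x j)^2"]) (use that in auto)
    have "z x j * (z x k * A k j) \<le> \<bar>A k j\<bar> * E x" if "j \<le> S" "k \<le> S" for j k
    proof -
      have "z x j * (z x k * A k j) \<le> \<bar>z x j\<bar> * \<bar>z x k\<bar> * \<bar>A k j\<bar>"
        by (metis abs_ge_self abs_mult mult.assoc)
      also have "\<dots> \<le> ((z x j)^2 + (z x k)^2) / 2 * \<bar>A k j\<bar>"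
      proof (rule mult_right_mono)
        have "0 \<le> (\<bar>z x j\<bar> - \<bar>z x k\<bar>)^2" by simp
        then show "\<bar>z x j\<bar> * \<bar>z x k\<bar> \<le> ((z x j)^2 + (z x k)^2) / 2"
          by (simp add: power2_eq_square algebra_simps)
      qed simp
      also have "\<dots> \<le> E x * \<bar>A k j\<bar>"
        by (rule mult_right_mono) (use zsq[OF that(1)] zsq[OF that(2)] in auto)
      finally show ?thesis by (simp add: mult.commute)
    qed
    then have "E' x \<le> (\<Sum>j\<le>S. 2 * (\<Sum>k\<le>S. \<bar>A k j\<bar> * E x))"
      unfolding E'_def
      by (intro sum_mono) (auto simp: sum_distrib_left mult.assoc intro!: sum_mono)
    also have "\<dots> = 2 * E x * (\<Sum>j\<le>S. \<Sum>k\<le>S. \<bar>A k j\<bar>)"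
      by (simp add: sum_distrib_left sum_distrib_right algebra_simps)
    also have "(\<Sum>j\<le>S. \<Sum>k\<le>S. \<bar>A k j\<bar>) = K" unfolding K_def by (rule sum.swap)
    finally show ?thesis by (simp add: algebra_simps)
  qed
  define F where "F t = exp (- (2*K) * t) * E t" for t
  have dF: "(F has_real_derivative (exp (- (2*K) * x) * (E' x - 2 * K * E x))) (at x)" for x
    unfolding F_def
    by (auto intro!: derivative_eq_intros dE simp: algebra_simps)
  have "F t \<le> F 0"
    by (rule DERIV_nonpos_imp_nonincreasing[OF t])
       (use dF Ebd in \<open>auto intro!: exI mult_nonneg_nonpos simp: mult_le_0_iff\<close>)
  moreover have "F 0 = 0" unfolding F_def E_def using z0 by simp
  moreover have "0 \<le> E t" unfolding E_def by (simp add: sum_nonneg)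
  ultimately have "E t = 0" unfolding F_def
    by (metis exp_gt_zero mult_le_0_iff not_le order_antisym)
  moreover have "(z t j)^2 \<le> E t"
    unfolding E_def by (rule member_le_sum[where f="\<lambda>j. (z t j)^2"]) (use j in auto)
  ultimately show ?thesis by simp
qed

lemma tp_nonneg:
  fixes Q :: "nat \<Rightarrow> nat \<Rightarrow> real"
  assumes Qoff: "\<And>k j. k \<le> S \<Longrightarrow> j \<le> S \<Longrightarrow> k \<noteq> j \<Longrightarrow> 0 \<le> Q k j"
    and t: "0 \<le> t" and j: "j \<le> S"
  shows "0 \<le> trans_prob S Q t i j"
proof -
  define q where "q = (\<Sum>k\<le>S. \<bar>Q k k\<bar>)"
  define N where "N k j = Q k j + (if k = j then q else 0)" for k j
  have Nnn: "\<forall>k\<le>S. \<forall>j\<le>S. 0 \<le> N k j"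
  proof (intro allI impI)
    fix k j assume kj: "k \<le> S" "j \<le> S"
    show "0 \<le> N k j"
    proof (cases "k = j")
      case True
      have "\<bar>Q k k\<bar> \<le> q" unfolding q_def
        by (rule member_le_sum[where f="\<lambda>k. \<bar>Q k k\<bar>"]) (use kj in auto)
      then show ?thesis using True unfolding N_def by simp
    qed (use Qoff kj in \<open>simp add: N_def\<close>)
  qed
  define P' where "P' t j = exp (- q * t) * trans_prob S N t i j" for t j
  define z where "z t j = trans_prob S Q t i j - P' t j" for t j
  have dP': "((\<lambda>t. P' t j) has_real_derivative (\<Sum>k\<le>S. P' t k * Q k j)) (at t)"
    if "j \<le> S" for t j
  proof -
    have "((\<lambda>t. P' t j) has_real_derivative
           (- q * exp (- q * t) * trans_prob S N t i j + exp (- q * t) * (\<Sum>k\<le>S. trans_prob S N t i k * N k j))) (at t)"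
      unfolding P'_def
      by (rule DERIV_cong, rule DERIV_mult[OF _ tp_deriv[OF that]])
         (auto intro!: derivative_eq_intros simp: algebra_simps)
    moreover have "(\<Sum>k\<le>S. trans_prob S N t i k * N k j)
        = (\<Sum>k\<le>S. trans_prob S N t i k * Q k j) + trans_prob S N t i j * q"
      unfolding N_def using that
      by (simp add: distrib_left sum.distrib if_distrib[of "\<lambda>x. _ * x"] cong: if_cong)
    moreover have "- q * exp (- q * t) * trans_prob S N t i j + exp (- q * t) * ((\<Sum>k\<le>S. trans_prob S N t i k * Q k j) + trans_prob S N t i j * q)
       = (\<Sum>k\<le>S. P' t k * Q k j)"
      unfolding P'_def by (simp add: algebra_simps sum_distrib_left)
    ultimately show ?thesis by simp
  qed
  have dz: "((\<lambda>t. z t j) has_real_derivative (\<Sum>k\<le>S. z t k * Q k j)) (at t)"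
    if "j \<le> S" for t j
    unfolding z_def
    by (rule DERIV_cong, rule DERIV_diff[OF tp_deriv[OF that] dP'[OF that]])
       (simp add: algebra_simps sum_subtractf)
  have "z t j = 0"
    by (rule ode_unique[OF dz _ t j]) (simp_all add: z_def P'_def tp_zero)
  moreover have "0 \<le> P' t j" unfolding P'_def
    by (intro mult_nonneg_nonneg tp_nonneg_pos[OF Nnn j t]) simp
  ultimately show ?thesis unfolding z_def by simp
qed

lemma tp_rowsum:
  fixes Q :: "nat \<Rightarrow> nat \<Rightarrow> real"
  assumes Qrow: "\<And>k. k \<le> S \<Longrightarrow> (\<Sum>j\<le>S. Q k j) = 0" and i: "i \<le> S"
  shows "(\<Sum>j\<le>S. trans_prob S Q t i j) = 1"
proof -
  have d: "((\<lambda>t. \<Sum>j\<le>S. trans_prob S Q t i j) has_real_derivative 0) (at x)" for x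
  proof -
    have "((\<lambda>t. \<Sum>j\<le>S. trans_prob S Q t i j) has_real_derivative
            (\<Sum>j\<le>S. \<Sum>k\<le>S. trans_prob S Q x i k * Q k j)) (at x)"
      by (rule DERIV_sum, rule tp_deriv) auto
    moreover have "(\<Sum>j\<le>S. \<Sum>k\<le>S. trans_prob S Q x i k * Q k j) = 0"
      by (subst sum.swap) (simp add: sum_distrib_left[symmetric] Qrow)
    ultimately show ?thesis by simp
  qed
  have "(\<Sum>j\<le>S. trans_prob S Q t i j) = (\<Sum>j\<le>S. trans_prob S Q 0 i j)"
    by (rule DERIV_isconst_all) (use d in auto)
  also have "\<dots> = 1" using i by (simp add: tp_zero)
  finally show ?thesis .
qed

lemma avg_integral:
  fixes Q :: "nat \<Rightarrow> nat \<Rightarrow> real"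
  assumes Qrow: "\<And>k. k \<le> S \<Longrightarrow> (\<Sum>j\<le>S. Q k j) = 0" and s0: "s0 \<le> S"
    and pois: "\<And>i. i \<le> S \<Longrightarrow> (\<Sum>j\<le>S. Q i j * h j) = R i - g" and T: "0 \<le> T"
  shows "((\<lambda>t. \<Sum>j\<le>S. trans_prob S Q t s0 j * R j) has_integral
          ((\<Sum>j\<le>S. trans_prob S Q T s0 j * h j) - (\<Sum>j\<le>S. trans_prob S Q 0 s0 j * h j) + g * T)) {0..T}"
proof -
  define V where "V t = (\<Sum>j\<le>S. trans_prob S Q t s0 j * h j) + g * t" for t
  have dV: "(V has_real_derivative (\<Sum>j\<le>S. trans_prob S Q t s0 j * R j)) (at t)" for t
  proof -
    have "(V has_real_derivative (\<Sum>j\<le>S. (\<Sum>k\<le>S. trans_prob S Q t s0 k * Q k j) * h j) + g) (at t)"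
      unfolding V_def
      by (rule DERIV_add, rule DERIV_sum, rule DERIV_cmult_right, rule tp_deriv)
         (auto intro!: derivative_eq_intros)
    moreover have "(\<Sum>j\<le>S. (\<Sum>k\<le>S. trans_prob S Q t s0 k * Q k j) * h j)
        = (\<Sum>k\<le>S. trans_prob S Q t s0 k * (\<Sum>j\<le>S. Q k j * h j))"
      by (simp add: sum_distrib_right sum_distrib_left mult.assoc) (rule sum.swap)
    also have "\<dots> = (\<Sum>k\<le>S. trans_prob S Q t s0 k * R k) - g * (\<Sum>k\<le>S. trans_prob S Q t s0 k)"
    proof -
      have "(\<Sum>k\<le>S. trans_prob S Q t s0 k * (\<Sum>j\<le>S. Q k j * h j))
          = (\<Sum>k\<le>S. trans_prob S Q t s0 k * (R k - g))"
        by (rule sum.cong) (simp_all add: pois)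
      then show ?thesis by (simp add: left_diff_distrib sum_subtractf sum_distrib_left mult.commute)
    qed
    also have "\<dots> = (\<Sum>k\<le>S. trans_prob S Q t s0 k * R k) - g"
      by (simp add: tp_rowsum[OF Qrow s0])
    finally show ?thesis by simp
  qed
  have "((\<lambda>t. \<Sum>j\<le>S. trans_prob S Q t s0 j * R j) has_integral (V T - V 0)) {0..T}"
    by (rule fundamental_theorem_of_calculus[OF T])
       (auto intro!: has_field_derivative_at_within dV simp: has_real_derivative_iff_has_vector_derivative[symmetric])
  then show ?thesis unfolding V_def by (simp add: algebra_simps)
qed

lemma avg_tendsto:
  fixes Q :: "nat \<Rightarrow> nat \<Rightarrow> real"
  assumes Qoff: "\<And>k j. k \<le> S \<Longrightarrow> j \<le> S \<Longrightarrow> k \<noteq> j \<Longrightarrow> 0 \<le> Q k j"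
    and Qrow: "\<And>k. k \<le> S \<Longrightarrow> (\<Sum>j\<le>S. Q k j) = 0" and s0: "s0 \<le> S"
    and pois: "\<And>i. i \<le> S \<Longrightarrow> (\<Sum>j\<le>S. Q i j * h j) = R i - g"
  shows "((\<lambda>T. (1 / T) * integral {0..T} (\<lambda>t. \<Sum>j\<le>S. trans_prob S Q t s0 j * R j)) \<longlongrightarrow> g) at_top"
proof -
  define v where "v t = (\<Sum>j\<le>S. trans_prob S Q t s0 j * h j)" for t
  define H where "H = (\<Sum>j\<le>S. \<bar>h j\<bar>)"
  have vb: "\<bar>v t\<bar> \<le> H" if "0 \<le> t" for t
  proof -
    have P1: "trans_prob S Q t s0 j \<le> 1" if "j \<le> S" for j
    proof -
      have "trans_prob S Q t s0 j \<le> (\<Sum>j\<le>S. trans_prob S Q t s0 j)"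
        by (rule member_le_sum[where f="\<lambda>j. trans_prob S Q t s0 j"])
           (use that \<open>0 \<le> t\<close> in \<open>auto intro: tp_nonneg[OF Qoff]\<close>)
      then show ?thesis by (simp add: tp_rowsum[OF Qrow s0])
    qed
    have "\<bar>v t\<bar> \<le> (\<Sum>j\<le>S. \<bar>trans_prob S Q t s0 j * h j\<bar>)" unfolding v_def by (rule sum_abs)
    also have "\<dots> \<le> H" unfolding H_def
    proof (rule sum_mono)
      fix j assume "j \<in> {..S}"
      then have "0 \<le> trans_prob S Q t s0 j" "trans_prob S Q t s0 j \<le> 1"
        using P1 tp_nonneg[OF Qoff] \<open>0 \<le> t\<close> by auto
      then show "\<bar>trans_prob S Q t s0 j * h j\<bar> \<le> \<bar>h j\<bar>"
        by (simp add: abs_mult mult_left_le_one_le)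
    qed
    finally show ?thesis .
  qed
  have ev: "eventually (\<lambda>T. g + (v T - v 0) / T =
      (1 / T) * integral {0..T} (\<lambda>t. \<Sum>j\<le>S. trans_prob S Q t s0 j * R j)) at_top"
    using eventually_gt_at_top[of "0::real"]
  proof eventually_elim
    case (elim T)
    have "integral {0..T} (\<lambda>t. \<Sum>j\<le>S. trans_prob S Q t s0 j * R j) = v T - v 0 + g * T"
      unfolding v_def by (rule integral_unique, rule avg_integral[OF Qrow s0 pois]) (use elim in auto)
    then show ?case using elim by (simp add: field_simps)
  qed
  have z: "((\<lambda>T. (v T - v 0) / T) \<longlongrightarrow> 0) at_top"
  proof (rule Lim_null_comparison)
    show "eventually (\<lambda>T. norm ((v T - v 0) / T) \<le> (2 * H) / T) at_top"
      using eventually_gt_at_top[of "0::real"]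
    proof eventually_elim
      case (elim T)
      have "\<bar>v T - v 0\<bar> \<le> 2 * H" using vb[of T] vb[of 0] elim by simp
      then show ?case using elim by (simp add: divide_right_mono)
    qed
    show "((\<lambda>T. 2 * H / T) \<longlongrightarrow> 0) at_top"
      by (rule tendsto_divide_0[OF tendsto_const filterlim_at_top_imp_at_infinity[OF filterlim_ident]])
  qed
  have "((\<lambda>T. g + (v T - v 0) / T) \<longlongrightarrow> g + 0) at_top"
    by (rule tendsto_add[OF tendsto_const z])
  then show ?thesis using ev by (simp add: tendsto_cong)
qed

lemma avg_le:
  fixes Q :: "nat \<Rightarrow> nat \<Rightarrow> real"
  assumes Qoff: "\<And>k j. k \<le> S \<Longrightarrow> j \<le> S \<Longrightarrow> k \<noteq> j \<Longrightarrow> 0 \<le> Q k j"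
    and Qrow: "\<And>k. k \<le> S \<Longrightarrow> (\<Sum>j\<le>S. Q k j) = 0" and s0: "s0 \<le> S"
    and pois1: "\<And>i. i \<le> S \<Longrightarrow> (\<Sum>j\<le>S. Q i j * h1 j) = R1 i - g1"
    and pois2: "\<And>i. i \<le> S \<Longrightarrow> (\<Sum>j\<le>S. Q i j * h2 j) = R2 i - g2"
    and le: "\<And>i. i \<le> S \<Longrightarrow> R1 i \<le> R2 i"
  shows "g1 \<le> g2"
proof (rule tendsto_le[OF _ avg_tendsto[where Q=Q, OF Qoff Qrow s0 pois2] avg_tendsto[where Q=Q, OF Qoff Qrow s0 pois1]])
  show "at_top \<noteq> (bot :: real filter)" by simp
  show "eventually (\<lambda>T. (1 / T) * integral {0..T} (\<lambda>t. \<Sum>j\<le>S. trans_prob S Q t s0 j * R1 j)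
     \<le> (1 / T) * integral {0..T} (\<lambda>t. \<Sum>j\<le>S. trans_prob S Q t s0 j * R2 j)) at_top"
    using eventually_gt_at_top[of "0::real"]
  proof eventually_elim
    case (elim T)
    have "integral {0..T} (\<lambda>t. \<Sum>j\<le>S. trans_prob S Q t s0 j * R1 j)
        \<le> integral {0..T} (\<lambda>t. \<Sum>j\<le>S. trans_prob S Q t s0 j * R2 j)"
    proof (rule has_integral_le[OF integrable_integral integrable_integral])
      show "(\<lambda>t. \<Sum>j\<le>S. trans_prob S Q t s0 j * R1 j) integrable_on {0..T}"
        by (rule has_integral_integrable, rule avg_integral[where Q=Q, OF Qrow s0 pois1]) (use elim in auto)
      show "(\<lambda>t. \<Sum>j\<le>S. trans_prob S Q t s0 j * R2 j) integrable_on {0..T}"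
        by (rule has_integral_integrable, rule avg_integral[where Q=Q, OF Qrow s0 pois2]) (use elim in auto)
      fix t assume "t \<in> {0..T}"
      then show "(\<Sum>j\<le>S. trans_prob S Q t s0 j * R1 j) \<le> (\<Sum>j\<le>S. trans_prob S Q t s0 j * R2 j)"
        by (intro sum_mono mult_left_mono le tp_nonneg[OF Qoff]) auto
    qed
    then show ?case using elim by (simp add: divide_right_mono)
  qed
qed

lemma gen_sum:
  assumes k: "k \<le> S"
  shows "(\<Sum>j\<le>S. generator m S c mu Lam p d k j * h j)
     = birth_rate m S Lam p d k * (h (Suc k) - h k) + death_rate c mu k * (h (k - 1) - h k)"
proof -
  have bS: "birth_rate m S Lam p d S = 0" by (simp add: birth_rate_def)
  have d0: "death_rate c mu 0 = 0" by (simp add: death_rate_def)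
  have "(\<Sum>j\<le>S. generator m S c mu Lam p d k j * h j)
     = (\<Sum>j\<le>S. (if j = Suc k then birth_rate m S Lam p d k * h j else 0))
     + (\<Sum>j\<le>S. (if Suc j = k then death_rate c mu k * h j else 0))
     - (\<Sum>j\<le>S. (if j = k then (birth_rate m S Lam p d k + death_rate c mu k) * h j else 0))"
    unfolding sum.distrib[symmetric] sum_subtractf[symmetric]
    by (rule sum.cong) (simp_all add: generator_def algebra_simps)
  also have "(\<Sum>j\<le>S. (if j = Suc k then birth_rate m S Lam p d k * h j else 0))
      = (if Suc k \<le> S then birth_rate m S Lam p d k * h (Suc k) else 0)"
    by (simp add: sum.delta)
  also have "(\<Sum>j\<le>S. (if Suc j = k then death_rate c mu k * h j else 0))
      = (if 1 \<le> k then death_rate c mu k * h (k - 1) else 0)"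
  proof (cases k)
    case (Suc k')
    have "(\<Sum>j\<le>S. (if Suc j = k then death_rate c mu k * h j else 0))
        = (\<Sum>j\<le>S. (if j = k' then death_rate c mu k * h j else 0))"
      by (rule sum.cong) (auto simp: Suc)
    then show ?thesis using k Suc by (simp add: sum.delta)
  qed simp
  also have "(\<Sum>j\<le>S. (if j = k then (birth_rate m S Lam p d k + death_rate c mu k) * h j else 0))
      = (birth_rate m S Lam p d k + death_rate c mu k) * h k"
    using k by (simp add: sum.delta)
  finally have eq: "(\<Sum>j\<le>S. generator m S c mu Lam p d k j * h j) =
    (if Suc k \<le> S then birth_rate m S Lam p d k * h (Suc k) else 0) +
    (if 1 \<le> k then death_rate c mu k * h (k - 1) else 0) -
    (birth_rate m S Lam p d k + death_rate c mu k) * h k" .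
  have A: "(if Suc k \<le> S then birth_rate m S Lam p d k * h (Suc k) else 0) = birth_rate m S Lam p d k * h (Suc k)"
  proof (cases "Suc k \<le> S")
    case False then have "k = S" using k by simp
    then show ?thesis using bS by simp
  qed simp
  have B: "(if 1 \<le> k then death_rate c mu k * h (k - 1) else 0) = death_rate c mu k * h (k - 1)"
    using d0 by (cases "k = 0") auto
  show ?thesis unfolding eq A B by (simp add: algebra_simps)
qed

fun bk :: "(nat\<Rightarrow>real) \<Rightarrow> (nat\<Rightarrow>real) \<Rightarrow> (nat\<Rightarrow>real) \<Rightarrow> real \<Rightarrow> nat \<Rightarrow> nat \<Rightarrow> real" where
  "bk be de R g S 0 = 0"
| "bk be de R g S (Suc n) = (be (S - n) * bk be de R g S n - R (S - n) + g) / de (S - n)"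

lemma bk_affine: "bk be de R g S n = bk be de R 0 S n + g * bk be de (\<lambda>_. 0) 1 S n"
  by (induction n) (simp_all add: field_simps add_divide_distrib diff_divide_distrib)

lemma bk_nonneg: "(\<And>k. 0 \<le> be k) \<Longrightarrow> (\<And>k. 0 \<le> de k) \<Longrightarrow> 0 \<le> bk be de (\<lambda>_. 0) 1 S n"
  by (induction n) simp_all

lemma poisson_exists:
  fixes Q :: "nat \<Rightarrow> nat \<Rightarrow> real"
  assumes row: "\<And>k h. k \<le> S \<Longrightarrow> (\<Sum>j\<le>S. Q k j * h j) = be k * (h (Suc k) - h k) + de k * (h (k - 1) - h k)"
    and be: "\<And>k. 0 \<le> be k" and de: "\<And>k. 1 \<le> k \<Longrightarrow> 0 < de k" and de0: "de 0 = 0"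
  shows "\<exists>g h. \<forall>i\<le>S. (\<Sum>j\<le>S. Q i j * h j) = R i - g"
proof -
  have de': "0 \<le> de k" for k using de[of k] de0 by (cases "k = 0") (auto simp: less_imp_le)
  define a where "a = bk be de R 0 S S"
  define b where "b = bk be de (\<lambda>_. 0) 1 S S"
  have b0: "0 \<le> b" unfolding b_def by (rule bk_nonneg[OF be de'])
  define g where "g = (R 0 - be 0 * a) / (1 + be 0 * b)"
  have den: "0 < 1 + be 0 * b" using be[of 0] b0 by (simp add: add_pos_nonneg)
  define D where "D i = bk be de R g S (S + 1 - i)" for i
  define h where "h i = (\<Sum>k=1..i. D k)" for i
  have hs: "h (Suc i) - h i = D (Suc i)" for i unfolding h_def by simp
  have hp: "h (i - 1) - h i = - D i" if i1: "1 \<le> i" for i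
  proof -
    obtain i' where "i = Suc i'" using i1 by (cases i) auto
    then show ?thesis using hs[of i'] by simp
  qed
  have "\<forall>i\<le>S. (\<Sum>j\<le>S. Q i j * h j) = R i - g"
  proof (intro allI impI)
    fix i assume i: "i \<le> S"
    show "(\<Sum>j\<le>S. Q i j * h j) = R i - g"
    proof (cases "i = 0")
      case True
      have "D 1 = a + g * b" unfolding D_def a_def b_def by (simp add: bk_affine[of _ _ R g])
      moreover have "be 0 * (a + g * b) = R 0 - g"
        using den unfolding g_def by (simp add: field_simps)
      ultimately show ?thesis using True row[OF i, of h] hs[of 0] de0 by simp
    next
      case False
      then have i1: "1 \<le> i" by simp
      have "S + 1 - i = Suc (S - i)" using i by simp
      then have "D i = (be i * D (Suc i) - R i + g) / de i"
        unfolding D_def using i by simp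
      then have "de i * D i = be i * D (Suc i) - R i + g" using de[OF i1] by simp
      moreover have "(\<Sum>j\<le>S. Q i j * h j) = be i * D (Suc i) + de i * (- D i)"
        using row[OF i, of h] hs[of i] hp[OF i1] by simp
      ultimately show ?thesis by (simp add: algebra_simps)
    qed
  qed
  then show ?thesis by blast
qed

lemma birth_nonneg:
  assumes d: "valid_policy m S d" and L: "0 \<le> Lam"
    and p: "\<And>s i. s < S \<Longrightarrow> i \<in> {1..m} \<Longrightarrow> 0 \<le> p s i"
  shows "0 \<le> birth_rate m S Lam p d s"
proof (cases "s < S")
  case True
  have "0 \<le> d s a * (\<Sum>i\<in>a. Lam * p s i)" if "a \<in> Pow {1..m}" for a
  proof (cases "d s a = 0")
    case False
    then have "a \<subseteq> {1..m}" using d True unfolding valid_policy_def by blast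
    moreover have "0 \<le> d s a" using d True unfolding valid_policy_def by blast
    ultimately show ?thesis using True L p
      by (intro mult_nonneg_nonneg sum_nonneg) auto
  qed simp
  then have "0 \<le> (\<Sum>a\<in>Pow {1..m}. d s a * (\<Sum>i\<in>a. Lam * p s i))" by (rule sum_nonneg)
  then show ?thesis using True unfolding birth_rate_def by simp
qed (simp add: birth_rate_def)

lemma avg_char:
  assumes c: "1 \<le> c" and mu: "0 < mu" and s0: "s0 \<le> S"
    and bnn: "\<And>s. 0 \<le> birth_rate m S Lam p d s"
  shows "(\<And>k j. k \<le> S \<Longrightarrow> j \<le> S \<Longrightarrow> k \<noteq> j \<Longrightarrow> 0 \<le> generator m S c mu Lam p d k j)"
    and "(\<And>k. k \<le> S \<Longrightarrow> (\<Sum>j\<le>S. generator m S c mu Lam p d k j) = 0)"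
    and "\<exists>g h. (\<forall>i\<le>S. (\<Sum>j\<le>S. generator m S c mu Lam p d i j * h j) = R i - g)"
    and "(\<And>g h. (\<forall>i\<le>S. (\<Sum>j\<le>S. generator m S c mu Lam p d i j * h j) = reward_rate m S r Lam p d i - g)
          \<Longrightarrow> avg_reward m S c mu r Lam p d s0 = g)"
proof -
  let ?Q = "generator m S c mu Lam p d"
  have de0: "death_rate c mu 0 = 0" by (simp add: death_rate_def)
  have dep: "0 < death_rate c mu k" if "1 \<le> k" for k
    using that c mu by (simp add: death_rate_def)
  have den: "0 \<le> death_rate c mu k" for k using mu by (simp add: death_rate_def)
  show Qoff: "0 \<le> ?Q k j" if "k \<le> S" "j \<le> S" "k \<noteq> j" for k j
    using that bnn[of k] den[of k] by (simp add: generator_def)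
  show Qrow: "(\<Sum>j\<le>S. ?Q k j) = 0" if "k \<le> S" for k
    using gen_sum[OF that, of m c mu Lam p d "\<lambda>_. 1"] by simp
  show "\<exists>g h. (\<forall>i\<le>S. (\<Sum>j\<le>S. ?Q i j * h j) = R i - g)"
    by (rule poisson_exists[where be="birth_rate m S Lam p d" and de="death_rate c mu"])
       (use gen_sum bnn dep de0 in auto)
  fix g h assume pois: "\<forall>i\<le>S. (\<Sum>j\<le>S. ?Q i j * h j) = reward_rate m S r Lam p d i - g"
  have "((\<lambda>T. (1 / T) * integral {0..T} (\<lambda>t. \<Sum>j\<le>S. trans_prob S ?Q t s0 j * reward_rate m S r Lam p d j)) \<longlongrightarrow> g) at_top"
    by (rule avg_tendsto[OF Qoff Qrow s0]) (use pois in auto)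
  then show "avg_reward m S c mu r Lam p d s0 = g"
    unfolding avg_reward_def by (intro tendsto_Lim) auto
qed

lemma lex_le_antisym:
  assumes "lex_le xs ys" "lex_le ys xs" "length xs = length ys"
  shows "xs = ys"
proof (rule ccontr)
  assume ne: "xs \<noteq> ys"
  obtain k where k: "k < length xs" "take k xs = take k ys" "xs ! k < ys ! k"
    using assms(1) ne unfolding lex_le_def by blast
  obtain k' where k': "k' < length ys" "take k' ys = take k' xs" "ys ! k' < xs ! k'"
    using assms(2) ne unfolding lex_le_def by blast
  have nth_eq: "xs ! i = ys ! i" if "take n xs = take n ys" "i < n" for i n
  proof -
    have "take n xs ! i = take n ys ! i" using that(1) by simp
    then show ?thesis using that(2) by (simp only: nth_take)
  qed
  show False
  proof (cases k k' rule: linorder_cases)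
    case less
    have "xs ! k = ys ! k" by (rule nth_eq[OF k'(2)[symmetric] less])
    then show ?thesis using k(3) by simp
  next
    case equal then show ?thesis using k(3) k'(3) by simp
  next
    case greater
    have "xs ! k' = ys ! k'" by (rule nth_eq[OF k(2) greater])
    then show ?thesis using k'(3) by simp
  qed
qed

lemma sum_reindex_sigma:
  assumes "bij_betw sg {1..m} {1..m}"
  shows "(\<Sum>i=1..m. f i) = (\<Sum>l=1..m. f (sg l))"
  using sum.reindex_bij_betw[OF assms, of f] by simp

lemma prefix_bound:
  assumes sg: "bij_betw sg {1..m} {1..m}" and q: "q \<in> ball_set m phat eps"
    and ph: "prob_vec m phat" and j: "j \<le> m"
  shows "(\<Sum>l=1..j. q (sg l)) \<le> 1"
    and "(\<Sum>l=1..j. q (sg l)) \<le> (\<Sum>l=1..j. phat (sg l)) + eps / 2"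
proof -
  have sgm: "sg l \<in> {1..m}" if "l \<in> {1..m}" for l by (rule bij_betw_apply[OF sg that])
  have qv: "prob_vec m q" and qd: "(\<Sum>i=1..m. \<bar>q i - phat i\<bar>) \<le> eps"
    using q unfolding ball_set_def by simp_all
  have qn: "0 \<le> q (sg l)" if "l \<in> {1..m}" for l
    using qv sgm[OF that] unfolding prob_vec_def by blast
  have q1: "(\<Sum>l=1..m. q (sg l)) = 1"
    using qv sum_reindex_sigma[OF sg, of q] unfolding prob_vec_def by linarith
  have p1: "(\<Sum>l=1..m. phat (sg l)) = 1"
    using ph sum_reindex_sigma[OF sg, of phat] unfolding prob_vec_def by linarith
  have l1: "(\<Sum>l=1..m. \<bar>q (sg l) - phat (sg l)\<bar>) \<le> eps"
    using qd sum_reindex_sigma[OF sg, of "\<lambda>i. \<bar>q i - phat i\<bar>"] by linarith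
  have split: "(\<Sum>l=1..m. f l) = (\<Sum>l=1..j. f l) + (\<Sum>l=j+1..m. f l)" for f :: "nat \<Rightarrow> real"
    using sum.ub_add_nat[of 1 j f "m - j"] j by simp
  have "0 \<le> (\<Sum>l=j+1..m. q (sg l))" by (rule sum_nonneg) (use qn in auto)
  then show "(\<Sum>l=1..j. q (sg l)) \<le> 1" using split[of "\<lambda>l. q (sg l)"] q1 by simp
  define X where "X = (\<Sum>l=1..j. q (sg l) - phat (sg l))"
  define Y where "Y = (\<Sum>l=j+1..m. q (sg l) - phat (sg l))"
  have XY: "X + Y = 0"
    using split[of "\<lambda>l. q (sg l) - phat (sg l)"] q1 p1 unfolding X_def Y_def
    by (simp add: sum_subtractf)
  have "X \<le> (\<Sum>l=1..j. \<bar>q (sg l) - phat (sg l)\<bar>)" unfolding X_def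
    by (rule sum_mono) simp
  moreover have "- Y = (\<Sum>l=j+1..m. - (q (sg l) - phat (sg l)))" unfolding Y_def
    by (simp only: sum_negf)
  moreover have "(\<Sum>l=j+1..m. - (q (sg l) - phat (sg l))) \<le> (\<Sum>l=j+1..m. \<bar>q (sg l) - phat (sg l)\<bar>)"
    by (rule sum_mono) simp
  ultimately have "X - Y \<le> eps" using split[of "\<lambda>l. \<bar>q (sg l) - phat (sg l)\<bar>"] l1 by simp
  then have "X \<le> eps / 2" using XY by simp
  then show "(\<Sum>l=1..j. q (sg l)) \<le> (\<Sum>l=1..j. phat (sg l)) + eps / 2"
    unfolding X_def by (simp add: sum_subtractf)
qed

definition Qt :: "nat \<Rightarrow> (nat \<Rightarrow> real) \<Rightarrow> real \<Rightarrow> (nat \<Rightarrow> nat) \<Rightarrow> nat \<Rightarrow> real" where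
  "Qt m phat eps sg j = (if j = 0 then 0 else min 1 ((\<Sum>l=1..j. phat (sg l)) + eps / 2))"

definition qt :: "nat \<Rightarrow> (nat \<Rightarrow> real) \<Rightarrow> real \<Rightarrow> (nat \<Rightarrow> nat) \<Rightarrow> nat \<Rightarrow> real" where
  "qt m phat eps sg i = (let l = the_inv_into {1..m} sg i in Qt m phat eps sg l - Qt m phat eps sg (l - 1))"

lemma qt_sg:
  assumes sg: "bij_betw sg {1..m} {1..m}" and l: "l \<in> {1..m}"
  shows "qt m phat eps sg (sg l) = Qt m phat eps sg l - Qt m phat eps sg (l - 1)"
  unfolding qt_def Let_def using the_inv_into_f_f[OF bij_betw_imp_inj_on[OF sg] l] by simp

lemma qt_prefix:
  assumes sg: "bij_betw sg {1..m} {1..m}" and j: "j \<le> m"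
  shows "(\<Sum>l=1..j. qt m phat eps sg (sg l)) = Qt m phat eps sg j"
  using j
proof (induction j)
  case 0 then show ?case by (simp add: Qt_def)
next
  case (Suc j)
  then show ?case by (simp add: qt_sg[OF sg])
qed

lemma Qt_mono:
  assumes sg: "bij_betw sg {1..m} {1..m}" and ph: "prob_vec m phat" and eps: "0 \<le> eps"
    and j: "Suc j \<le> m"
  shows "Qt m phat eps sg j \<le> Qt m phat eps sg (Suc j)"
proof -
  have sgm: "sg l \<in> {1..m}" if "l \<in> {1..m}" for l by (rule bij_betw_apply[OF sg that])
  have pn: "0 \<le> phat (sg l)" if "l \<in> {1..m}" for l using ph sgm[OF that] by (auto simp: prob_vec_def)
  have P0: "0 \<le> (\<Sum>l=1..j. phat (sg l))" by (rule sum_nonneg) (use pn j in auto)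
  have "0 \<le> phat (sg (Suc j))" using pn j by auto
  moreover have "(\<Sum>l=1..Suc j. phat (sg l)) = (\<Sum>l=1..j. phat (sg l)) + phat (sg (Suc j))"
    by simp
  ultimately show ?thesis using P0 eps unfolding Qt_def
    by (cases "j = 0") (simp_all add: min_def)
qed

lemma qt_in_ball:
  assumes sg: "bij_betw sg {1..m} {1..m}" and ph: "prob_vec m phat" and eps: "0 \<le> eps"
  shows "qt m phat eps sg \<in> ball_set m phat eps"
proof -
  let ?Q = "Qt m phat eps sg" and ?q = "qt m phat eps sg"
  define Pi where "Pi j = (\<Sum>l=1..j. phat (sg l))" for j
  have sgm: "sg l \<in> {1..m}" if "l \<in> {1..m}" for l by (rule bij_betw_apply[OF sg that])
  have pn: "0 \<le> phat (sg l)" if "l \<in> {1..m}" for l using ph sgm[OF that] by (auto simp: prob_vec_def)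
  have p1: "Pi m = 1" using ph sum_reindex_sigma[OF sg, of phat] unfolding prob_vec_def Pi_def by linarith
  have m1: "1 \<le> m" using ph unfolding prob_vec_def by (cases m) auto
  have Pimono: "Pi j \<le> Pi (Suc j)" if "Suc j \<le> m" for j
    using pn[of "Suc j"] that by (simp add: Pi_def)
  have Pi_mono: "Pi j \<le> Pi k" if "j \<le> k" "k \<le> m" for j k
    using that
  proof (induction k)
    case (Suc k) then show ?case using Pimono[of k] by (cases "j = Suc k") auto
  qed simp
  have nn: "0 \<le> ?q i" if "i \<in> {1..m}" for i
  proof -
    have "i \<in> sg ` {1..m}" using that bij_betw_imp_surj_on[OF sg] by simp
    then obtain l where l: "l \<in> {1..m}" "i = sg l" by blast
    have "?Q (l - 1) \<le> ?Q (Suc (l - 1))" by (rule Qt_mono[OF sg ph eps]) (use l in auto)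
    then show ?thesis using l qt_sg[OF sg l(1)] by simp
  qed
  have sum1: "(\<Sum>i=1..m. ?q i) = 1"
  proof -
    have "(\<Sum>i=1..m. ?q i) = (\<Sum>l=1..m. ?q (sg l))" by (rule sum_reindex_sigma[OF sg])
    also have "\<dots> = ?Q m" by (rule qt_prefix[OF sg order_refl])
    also have "\<dots> = 1" using p1 m1 eps by (simp add: Qt_def Pi_def)
    finally show ?thesis .
  qed
  define Gf where "Gf j = ?Q j - Pi j" for j
  have G0: "Gf 0 = 0" by (simp add: Gf_def Qt_def Pi_def)
  have Gn: "Gf n = min (1 - Pi n) (eps / 2)" if "1 \<le> n" for n
    using that by (simp add: Gf_def Qt_def Pi_def min_def)
  have Gm: "Gf m = 0" using Gn[OF m1] p1 eps by simp
  have G1: "Gf 1 \<le> eps / 2" using Gn[of 1] by (simp add: min_def)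
  have G1nn: "0 \<le> Gf 1"
  proof -
    have "Pi 1 \<le> Pi m" by (rule Pi_mono) (use m1 in auto)
    then show ?thesis using Gn[of 1] p1 eps by simp
  qed
  have Gdec: "Gf (Suc n) \<le> Gf n" if "1 \<le> n" "Suc n \<le> m" for n
    using Gn[OF that(1)] Gn[of "Suc n"] Pimono[OF that(2)] by (simp add: min_def)
  have diff: "?q (sg l) - phat (sg l) = Gf l - Gf (l - 1)" if "l \<in> {1..m}" for l
  proof -
    have "Pi l = Pi (l - 1) + phat (sg l)" using that unfolding Pi_def
      by (cases l) auto
    then show ?thesis using qt_sg[OF sg that] unfolding Gf_def by simp
  qed
  have tel: "(\<Sum>l=1..n. \<bar>Gf l - Gf (l - 1)\<bar>) = 2 * Gf 1 - Gf n" if "1 \<le> n" "n \<le> m" for n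
    using that
  proof (induction n)
    case 0 then show ?case by simp
  next
    case (Suc n)
    show ?case
    proof (cases "n = 0")
      case True then show ?thesis using G0 G1nn by simp
    next
      case False
      then have "1 \<le> n" by simp
      then show ?thesis using Suc Gdec[of n] by simp
    qed
  qed
  have "(\<Sum>i=1..m. \<bar>?q i - phat i\<bar>) = (\<Sum>l=1..m. \<bar>Gf l - Gf (l - 1)\<bar>)"
    by (rule trans[OF sum_reindex_sigma[OF sg]], rule sum.cong) (simp_all add: diff)
  also have "\<dots> = 2 * Gf 1" using tel[OF m1 order_refl] Gm by simp
  finally have "(\<Sum>i=1..m. \<bar>?q i - phat i\<bar>) \<le> eps" using G1 by simp
  then show ?thesis using nn sum1 unfolding ball_set_def prob_vec_def by auto
qed

lemma prio_take: "n \<le> m \<Longrightarrow> take n (prio_vec m sg q) = map (\<lambda>l. q (sg l)) [1..<n+1]"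
  unfolding prio_vec_def by (simp add: take_map take_upt del: upt_Suc)

lemma prio_nth: "k < m \<Longrightarrow> prio_vec m sg q ! k = q (sg (k + 1))"
  unfolding prio_vec_def by (simp add: nth_map del: upt_Suc)

lemma prio_len: "length (prio_vec m sg q) = m"
  unfolding prio_vec_def by (simp del: upt_Suc)

lemma prefix_le_Qt:
  assumes sg: "bij_betw sg {1..m} {1..m}" and q: "q \<in> ball_set m phat eps"
    and ph: "prob_vec m phat" and eps: "0 \<le> eps" and j: "j \<le> m"
  shows "(\<Sum>l=1..j. q (sg l)) \<le> Qt m phat eps sg j"
  using prefix_bound[OF sg q ph j] by (cases "j = 0") (simp_all add: Qt_def)

lemma qt_lexmax:
  assumes sg: "bij_betw sg {1..m} {1..m}" and ph: "prob_vec m phat" and eps: "0 \<le> eps"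
  shows "lex_maximizer m (ball_set m phat eps) sg (qt m phat eps sg)"
  unfolding lex_maximizer_def
proof (intro conjI ballI)
  show "qt m phat eps sg \<in> ball_set m phat eps" by (rule qt_in_ball[OF sg ph eps])
  fix q assume q: "q \<in> ball_set m phat eps"
  let ?qt = "qt m phat eps sg"
  show "lex_le (prio_vec m sg q) (prio_vec m sg ?qt)"
  proof (cases "\<forall>l\<in>{1..m}. q (sg l) = ?qt (sg l)")
    case True
    have "prio_vec m sg q = prio_vec m sg ?qt"
      unfolding prio_vec_def by (rule map_cong[OF refl]) (use True in auto)
    then show ?thesis unfolding lex_le_def by blast
  next
    case False
    define P where "P l \<longleftrightarrow> l \<in> {1..m} \<and> q (sg l) \<noteq> ?qt (sg l)" for l
    have ex: "\<exists>l. P l" using False unfolding P_def by blast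
    define k where "k = (LEAST l. P l)"
    have Pk: "P k" unfolding k_def by (rule LeastI_ex[OF ex])
    have below: "q (sg l) = ?qt (sg l)" if "1 \<le> l" "l < k" for l
    proof -
      have "\<not> P l" unfolding k_def by (rule not_less_Least) (use that in \<open>simp add: k_def\<close>)
      moreover have "l \<le> m" using Pk that unfolding P_def by simp
      ultimately show ?thesis using that unfolding P_def by simp
    qed
    obtain k' where kk: "k = Suc k'" using Pk unfolding P_def by (cases k) auto
    have km: "k \<le> m" using Pk unfolding P_def by simp
    have tk: "take k' (prio_vec m sg q) = take k' (prio_vec m sg ?qt)"
    proof -
      have "take k' (prio_vec m sg q) = map (\<lambda>l. q (sg l)) [1..<k'+1]"
        by (rule prio_take) (use km kk in simp)
      also have "\<dots> = map (\<lambda>l. ?qt (sg l)) [1..<k'+1]"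
        by (rule map_cong[OF refl]) (use below kk in \<open>auto simp del: upt_Suc\<close>)
      also have "\<dots> = take k' (prio_vec m sg ?qt)"
        by (rule prio_take[symmetric]) (use km kk in simp)
      finally show ?thesis .
    qed
    have pre: "(\<Sum>l=1..k'. q (sg l)) = (\<Sum>l=1..k'. ?qt (sg l))"
      by (rule sum.cong[OF refl]) (use below kk in auto)
    have "(\<Sum>l=1..k. q (sg l)) \<le> Qt m phat eps sg k"
      by (rule prefix_le_Qt[OF sg q ph eps km])
    also have "\<dots> = (\<Sum>l=1..k. ?qt (sg l))" by (rule qt_prefix[OF sg km, symmetric])
    finally have "q (sg k) \<le> ?qt (sg k)" using pre unfolding kk by simp
    then have lt: "q (sg k) < ?qt (sg k)" using Pk unfolding P_def by simp
    have "k' < length (prio_vec m sg q)" using km kk by (simp add: prio_len)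
    moreover have "prio_vec m sg q ! k' < prio_vec m sg ?qt ! k'"
      using lt km kk by (simp add: prio_nth)
    ultimately show ?thesis using tk unfolding lex_le_def by blast
  qed
qed

lemma ptilde_props:
  assumes sg: "bij_betw sg {1..m} {1..m}" and ph: "prob_vec m phat" and eps: "0 \<le> eps"
  defines "pt \<equiv> (SOME q. lex_maximizer m (ball_set m phat eps) sg q)"
  shows "pt \<in> ball_set m phat eps"
    and "\<And>q j. q \<in> ball_set m phat eps \<Longrightarrow> j \<le> m \<Longrightarrow>
            (\<Sum>l=1..j. q (sg l)) \<le> (\<Sum>l=1..j. pt (sg l))"
proof -
  have lm: "lex_maximizer m (ball_set m phat eps) sg pt"
    unfolding pt_def by (rule someI[where P="lex_maximizer m (ball_set m phat eps) sg", OF qt_lexmax[OF sg ph eps]])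
  then show pin: "pt \<in> ball_set m phat eps" unfolding lex_maximizer_def by blast
  have peq: "prio_vec m sg pt = prio_vec m sg (qt m phat eps sg)"
  proof (rule lex_le_antisym)
    show "lex_le (prio_vec m sg pt) (prio_vec m sg (qt m phat eps sg))"
      using qt_lexmax[OF sg ph eps] pin unfolding lex_maximizer_def by blast
    show "lex_le (prio_vec m sg (qt m phat eps sg)) (prio_vec m sg pt)"
      using lm qt_in_ball[OF sg ph eps] unfolding lex_maximizer_def by blast
  qed (simp add: prio_len)
  then have eq: "pt (sg l) = qt m phat eps sg (sg l)" if "l \<in> {1..m}" for l
  proof -
    have "l - 1 < m" using that by auto
    then show ?thesis using peq prio_nth[of "l - 1" m sg pt] prio_nth[of "l - 1" m sg "qt m phat eps sg"] that by simp
  qed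
  fix q j assume q: "q \<in> ball_set m phat eps" and j: "j \<le> m"
  have "(\<Sum>l=1..j. q (sg l)) \<le> Qt m phat eps sg j" by (rule prefix_le_Qt[OF sg q ph eps j])
  also have "\<dots> = (\<Sum>l=1..j. qt m phat eps sg (sg l))" by (rule qt_prefix[OF sg j, symmetric])
  also have "\<dots> = (\<Sum>l=1..j. pt (sg l))" by (rule sum.cong) (use eq j in auto)
  finally show "(\<Sum>l=1..j. q (sg l)) \<le> (\<Sum>l=1..j. pt (sg l))" .
qed

lemma abel:
  fixes rho u v :: "nat \<Rightarrow> real"
  assumes mono: "\<And>l. 1 \<le> l \<Longrightarrow> Suc l \<le> n \<Longrightarrow> rho (Suc l) \<le> rho l"
    and pref: "\<And>j. j \<le> n \<Longrightarrow> (\<Sum>l=1..j. u l) \<le> (\<Sum>l=1..j. v l)"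
    and tot: "(\<Sum>l=1..n. u l) = (\<Sum>l=1..n. v l)"
  shows "(\<Sum>l=1..n. rho l * u l) \<le> (\<Sum>l=1..n. rho l * v l)"
proof -
  define D where "D j = (\<Sum>l=1..j. v l - u l)" for j
  have Dnn: "0 \<le> D j" if "j \<le> n" for j using pref[OF that] unfolding D_def by (simp add: sum_subtractf)
  have claim: "rho j * D j \<le> (\<Sum>l=1..j. rho l * (v l - u l))" if "j \<le> n" for j
    using that
  proof (induction j)
    case 0 then show ?case by (simp add: D_def)
  next
    case (Suc j)
    have IH: "rho j * D j \<le> (\<Sum>l=1..j. rho l * (v l - u l))" using Suc by simp
    have DS: "D (Suc j) = D j + (v (Suc j) - u (Suc j))" by (simp add: D_def)
    have "rho (Suc j) * D j \<le> rho j * D j"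
    proof (cases "j = 0")
      case True then show ?thesis by (simp add: D_def)
    next
      case False
      then show ?thesis using mono[of j] Suc.prems Dnn[of j]
        by (intro mult_right_mono) auto
    qed
    then have "rho (Suc j) * D (Suc j) \<le> rho j * D j + rho (Suc j) * (v (Suc j) - u (Suc j))"
      unfolding DS by (simp add: distrib_left)
    also have "\<dots> \<le> (\<Sum>l=1..Suc j. rho l * (v l - u l))" using IH by simp
    finally show ?case .
  qed
  have "D n = 0" using tot unfolding D_def by (simp add: sum_subtractf)
  then have "0 \<le> (\<Sum>l=1..n. rho l * (v l - u l))" using claim[of n] by simp
  then show ?thesis by (simp add: right_diff_distrib sum_subtractf)
qed

lemma sum_pow_swap:
  fixes E :: "'a set \<Rightarrow> real" and f :: "'a \<Rightarrow> real"
  assumes "finite A"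
  shows "(\<Sum>a\<in>Pow A. E a * (\<Sum>i\<in>a. f i)) = (\<Sum>i\<in>A. f i * (\<Sum>a\<in>Pow A. if i \<in> a then E a else 0))"
proof -
  have "(\<Sum>a\<in>Pow A. E a * (\<Sum>i\<in>a. f i)) = (\<Sum>a\<in>Pow A. \<Sum>i\<in>A. if i \<in> a then E a * f i else 0)"
  proof (rule sum.cong[OF refl])
    fix a assume a: "a \<in> Pow A"
    have "(\<Sum>i\<in>A. if i \<in> a then E a * f i else 0) = (\<Sum>i\<in>A \<inter> a. E a * f i)"
      by (rule sum.inter_restrict[OF assms, symmetric])
    also have "A \<inter> a = a" using a by auto
    finally show "E a * (\<Sum>i\<in>a. f i) = (\<Sum>i\<in>A. if i \<in> a then E a * f i else 0)"
      by (simp add: sum_distrib_left)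
  qed
  also have "\<dots> = (\<Sum>i\<in>A. \<Sum>a\<in>Pow A. if i \<in> a then E a * f i else 0)" by (rule sum.swap)
  also have "\<dots> = (\<Sum>i\<in>A. f i * (\<Sum>a\<in>Pow A. if i \<in> a then E a else 0))"
    by (rule sum.cong[OF refl]) (simp add: sum_distrib_left if_distrib mult.commute cong: if_cong)
  finally show ?thesis .
qed

definition pdist :: "'a set \<Rightarrow> ('a \<Rightarrow> real) \<Rightarrow> 'a set \<Rightarrow> real" where
  "pdist A x a = (\<Prod>i\<in>a. x i) * (\<Prod>i\<in>A - a. 1 - x i)"

lemma pdist_sum:
  assumes "finite A"
  shows "(\<Sum>a\<in>Pow A. pdist A x a) = 1"
  using prod_add[OF assms, of x "\<lambda>i. 1 - x i"] unfolding pdist_def by simp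

lemma pdist_marg:
  assumes A: "finite A" and i: "i \<in> A"
  shows "(\<Sum>a\<in>Pow A. if i \<in> a then pdist A x a else 0) = x i"
proof -
  define g where "g j = (if j = i then 0 else 1 - x j)" for j
  have "(\<Sum>a\<in>Pow A. if i \<in> a then pdist A x a else 0)
      = (\<Sum>a\<in>Pow A. (\<Prod>j\<in>a. x j) * (\<Prod>j\<in>A - a. g j))"
  proof (rule sum.cong[OF refl])
    fix a assume a: "a \<in> Pow A"
    show "(if i \<in> a then pdist A x a else 0) = (\<Prod>j\<in>a. x j) * (\<Prod>j\<in>A - a. g j)"
    proof (cases "i \<in> a")
      case True
      have "(\<Prod>j\<in>A - a. g j) = (\<Prod>j\<in>A - a. 1 - x j)"
        by (rule prod.cong[OF refl]) (use True in \<open>auto simp: g_def\<close>)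
      then show ?thesis using True by (simp add: pdist_def)
    next
      case False
      have "(\<Prod>j\<in>A - a. g j) = 0"
        by (rule prod_zero) (use A i False in \<open>auto simp: g_def\<close>)
      then show ?thesis using False by simp
    qed
  qed
  also have "\<dots> = (\<Prod>j\<in>A. x j + g j)" by (rule prod_add[OF A, symmetric])
  also have "\<dots> = (x i + g i) * (\<Prod>j\<in>A - {i}. x j + g j)" by (rule prod.remove[OF A i])
  also have "(\<Prod>j\<in>A - {i}. x j + g j) = 1" by (rule prod.neutral) (auto simp: g_def)
  finally show ?thesis by (simp add: g_def)
qed

lemma pdist_nonneg:
  assumes "\<And>i. i \<in> A \<Longrightarrow> 0 \<le> x i \<and> x i \<le> 1" "a \<subseteq> A"
  shows "0 \<le> pdist A x a"
  unfolding pdist_def using assms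
  by (intro mult_nonneg_nonneg prod_nonneg) auto

lemma couple:
  fixes lam lt x r :: "nat \<Rightarrow> real"
  assumes sg: "bij_betw sg {1..m} {1..m}"
    and rho: "\<And>k l. 1 \<le> k \<Longrightarrow> k \<le> l \<Longrightarrow> l \<le> m \<Longrightarrow> r (sg l) \<le> r (sg k)"
    and lam: "\<And>i. i \<in> {1..m} \<Longrightarrow> 0 \<le> lam i" and ltn: "\<And>i. i \<in> {1..m} \<Longrightarrow> 0 \<le> lt i"
    and pref: "\<And>j. j \<le> m \<Longrightarrow> (\<Sum>l=1..j. lam (sg l)) \<le> (\<Sum>l=1..j. lt (sg l))"
    and x: "\<And>i. i \<in> {1..m} \<Longrightarrow> 0 \<le> x i \<and> x i \<le> 1"
  shows "\<exists>y. (\<forall>i\<in>{1..m}. 0 \<le> y i \<and> y i \<le> 1)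
          \<and> (\<Sum>i=1..m. y i * lt i) = (\<Sum>i=1..m. x i * lam i)
          \<and> (\<Sum>i=1..m. x i * lam i * r i) \<le> (\<Sum>i=1..m. y i * lt i * r i)"
proof -
  have sgm: "sg l \<in> {1..m}" if "l \<in> {1..m}" for l by (rule bij_betw_apply[OF sg that])
  define u where "u l = x (sg l) * lam (sg l)" for l
  define B where "B = (\<Sum>l=1..m. u l)"
  define Lt where "Lt j = (\<Sum>l=1..j. lt (sg l))" for j
  define v where "v l = max 0 (min (lt (sg l)) (B - Lt (l - 1)))" for l
  define pos where "pos = the_inv_into {1..m} sg"
  define y where "y i = (if lt i = 0 then 0 else v (pos i) / lt i)" for i
  have posf: "pos (sg l) = l" if "l \<in> {1..m}" for l
    unfolding pos_def by (rule the_inv_into_f_f[OF bij_betw_imp_inj_on[OF sg] that])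
  have un: "0 \<le> u l" if "l \<in> {1..m}" for l
    unfolding u_def using x[OF sgm[OF that]] lam[OF sgm[OF that]] by simp
  have ule: "u l \<le> lam (sg l)" if "l \<in> {1..m}" for l
    unfolding u_def using x[OF sgm[OF that]] lam[OF sgm[OF that]] by (simp add: mult_left_le_one_le)
  have B0: "0 \<le> B" unfolding B_def by (rule sum_nonneg) (use un in auto)
  have split: "(\<Sum>l=1..m. f l) = (\<Sum>l=1..j. f l) + (\<Sum>l=j+1..m. f l)" if "j \<le> m" for f :: "nat \<Rightarrow> real" and j
    using sum.ub_add_nat[of 1 j f "m - j"] that by simp
  have upre: "(\<Sum>l=1..j. u l) \<le> min B (Lt j)" if j: "j \<le> m" for j
  proof -
    have "(\<Sum>l=1..j. u l) \<le> (\<Sum>l=1..j. lam (sg l))" by (rule sum_mono) (use ule j in auto)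
    also have "\<dots> \<le> Lt j" unfolding Lt_def by (rule pref[OF j])
    finally have a1: "(\<Sum>l=1..j. u l) \<le> Lt j" .
    have "0 \<le> (\<Sum>l=j+1..m. u l)" by (rule sum_nonneg) (use un in auto)
    then have "(\<Sum>l=1..j. u l) \<le> B" unfolding B_def using split[OF j, of u] by linarith
    then show ?thesis using a1 by simp
  qed
  have Ltm: "B \<le> Lt m" using upre[of m] unfolding B_def by simp
  have vpre: "(\<Sum>l=1..j. v l) = min B (Lt j)" if "j \<le> m" for j
    using that
  proof (induction j)
    case 0 then show ?case using B0 by (simp add: Lt_def)
  next
    case (Suc j)
    have lt0: "0 \<le> lt (sg (Suc j))" using ltn[OF sgm[of "Suc j"]] Suc.prems by simp
    have LS: "Lt (Suc j) = Lt j + lt (sg (Suc j))" by (simp add: Lt_def)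
    have "(\<Sum>l=1..Suc j. v l) = min B (Lt j) + v (Suc j)" using Suc by simp
    also have "\<dots> = min B (Lt (Suc j))"
      unfolding LS v_def using lt0 by (simp add: min_def max_def)
    finally show ?case .
  qed
  have vn: "0 \<le> v l" for l unfolding v_def by simp
  have vle: "v l \<le> lt (sg l)" if "l \<in> {1..m}" for l
    unfolding v_def using ltn[OF sgm[OF that]] by simp
  have yv: "y (sg l) * lt (sg l) = v l" if "l \<in> {1..m}" for l
  proof (cases "lt (sg l) = 0")
    case True
    then have "v l = 0" using vn[of l] vle[OF that] by simp
    then show ?thesis using True by (simp add: y_def)
  qed (simp add: y_def posf[OF that])
  have yr: "0 \<le> y i \<and> y i \<le> 1" if "i \<in> {1..m}" for i
  proof -
    have "i \<in> sg ` {1..m}" using that bij_betw_imp_surj_on[OF sg] by simp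
    then obtain l where l: "l \<in> {1..m}" "i = sg l" by blast
    show ?thesis
    proof (cases "lt i = 0")
      case False
      then have "0 < lt i" using ltn[OF that] by simp
      then show ?thesis using vn[of l] vle[OF l(1)] l posf[OF l(1)]
        by (simp add: y_def divide_le_eq_1)
    qed (simp add: y_def)
  qed
  have tot: "(\<Sum>l=1..m. u l) = (\<Sum>l=1..m. v l)"
    using vpre[of m] Ltm unfolding B_def[symmetric] by simp
  have e1: "(\<Sum>i=1..m. y i * lt i) = (\<Sum>l=1..m. v l)"
    by (rule trans[OF sum_reindex_sigma[OF sg]], rule sum.cong) (simp_all add: yv)
  have e2: "(\<Sum>i=1..m. x i * lam i) = (\<Sum>l=1..m. u l)"
    by (rule trans[OF sum_reindex_sigma[OF sg]]) (simp add: u_def)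
  have e3: "(\<Sum>i=1..m. y i * lt i * r i) = (\<Sum>l=1..m. r (sg l) * v l)"
  proof (rule trans[OF sum_reindex_sigma[OF sg]], rule sum.cong[OF refl])
    fix l assume "l \<in> {1..m}"
    then show "y (sg l) * lt (sg l) * r (sg l) = r (sg l) * v l" using yv by (simp add: mult.commute)
  qed
  have e4: "(\<Sum>i=1..m. x i * lam i * r i) = (\<Sum>l=1..m. r (sg l) * u l)"
    by (rule trans[OF sum_reindex_sigma[OF sg]]) (simp add: u_def mult.commute)
  have ab: "(\<Sum>l=1..m. r (sg l) * u l) \<le> (\<Sum>l=1..m. r (sg l) * v l)"
  proof (rule abel[where rho="\<lambda>l. r (sg l)"])
    fix l assume "1 \<le> l" "Suc l \<le> m"
    then show "r (sg (Suc l)) \<le> r (sg l)" by (intro rho) auto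
  next
    fix j assume "j \<le> m"
    then show "(\<Sum>l=1..j. u l) \<le> (\<Sum>l=1..j. v l)" using upre vpre by simp
  qed (rule tot)
  show ?thesis
    by (rule exI[of _ y]) (use yr e1 e2 e3 e4 ab tot in auto)
qed

definition marg :: "nat \<Rightarrow> (nat \<Rightarrow> nat set \<Rightarrow> real) \<Rightarrow> nat \<Rightarrow> nat \<Rightarrow> real" where
  "marg m d s i = (\<Sum>a\<in>Pow {1..m}. if i \<in> a then d s a else 0)"

lemma birth_formula:
  "birth_rate m S L q d s = (if s < S then (\<Sum>i\<in>{1..m}. (L * q s i) * marg m d s i) else 0)"
  unfolding birth_rate_def marg_def by (simp add: sum_pow_swap)

lemma reward_formula:
  "reward_rate m S r L q d s = (if s < S then (\<Sum>i\<in>{1..m}. (L * q s i * r i s) * marg m d s i) else 0)"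
  unfolding reward_rate_def marg_def by (simp add: sum_pow_swap)

lemma marg_range:
  assumes d: "valid_policy m S d" and s: "s < S"
  shows "0 \<le> marg m d s i \<and> marg m d s i \<le> 1"
proof -
  have dn: "0 \<le> d s a" for a using d s unfolding valid_policy_def by blast
  have d1: "(\<Sum>a\<in>Pow {1..m}. d s a) = 1" using d s unfolding valid_policy_def by blast
  have "0 \<le> marg m d s i" unfolding marg_def by (rule sum_nonneg) (simp add: dn)
  moreover have "marg m d s i \<le> (\<Sum>a\<in>Pow {1..m}. d s a)" unfolding marg_def
    by (rule sum_mono) (simp add: dn)
  ultimately show ?thesis using d1 by simp
qed

lemma ball_range:
  assumes "q \<in> ball_set m phat eps" "i \<in> {1..m}"
  shows "0 \<le> q i \<and> q i \<le> 1"
proof -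
  have qn: "\<forall>i\<in>{1..m}. 0 \<le> q i" and q1: "(\<Sum>i=1..m. q i) = 1"
    using assms(1) unfolding ball_set_def prob_vec_def by simp_all
  have "q i \<le> (\<Sum>i=1..m. q i)" by (rule member_le_sum) (use qn assms(2) in auto)
  then show ?thesis using qn assms(2) q1 by simp
qed

theorem theorem1:
  fixes m S c :: nat and mu Lmin Lmax a b eps :: real
    and r :: "nat \<Rightarrow> nat \<Rightarrow> real" and phat :: "nat \<Rightarrow> real"
    and ord :: "nat \<Rightarrow> nat \<Rightarrow> nat"
  assumes c_pos: "1 \<le> c" and mu_pos: "0 < mu"
    and Lmin_pos: "0 < Lmin" and I_sub: "Lmin \<le> a" "a \<le> b" "b \<le> Lmax"
    and phat: "prob_vec m phat" and eps: "0 \<le> eps"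
    and ord_bij: "\<And>s. s \<le> S \<Longrightarrow> bij_betw (ord s) {1..m} {1..m}"
    and sigma_order: "\<And>s k l. s \<le> S \<Longrightarrow> 1 \<le> k \<Longrightarrow> k \<le> l \<Longrightarrow> l \<le> m \<Longrightarrow>
                         r (ord s l) s \<le> r (ord s k) s"
  shows "in_class m S {a..b} (ball_set m phat eps) b (p_tilde m (ball_set m phat eps) ord)
    \<and> (\<forall>Lam p. in_class m S {a..b} (ball_set m phat eps) Lam p \<longrightarrow>
         (\<forall>s0\<le>S. opt_reward m S c mu r Lam p s0
                  \<le> opt_reward m S c mu r b (p_tilde m (ball_set m phat eps) ord) s0))"
proof -
  let ?P = "ball_set m phat eps"
  let ?pt = "p_tilde m ?P ord"
  have pt_eq: "?pt s = (SOME q. lex_maximizer m ?P (ord s) q)" for s by (simp add: p_tilde_def)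
  have pt_in: "?pt s \<in> ?P" if "s \<le> S" for s
    unfolding pt_eq by (rule ptilde_props(1)[OF ord_bij[OF that] phat eps])
  have pt_pref: "(\<Sum>l=1..j. q (ord s l)) \<le> (\<Sum>l=1..j. ?pt s (ord s l))"
    if "s \<le> S" "q \<in> ?P" "j \<le> m" for s q j
    unfolding pt_eq by (rule ptilde_props(2)[OF ord_bij[OF that(1)] phat eps that(2,3)])
  have b0: "0 < b" using Lmin_pos I_sub by simp
  have inc: "in_class m S {a..b} ?P b ?pt" unfolding in_class_def using I_sub pt_in by auto
  have ptn: "\<And>s i. s < S \<Longrightarrow> i \<in> {1..m} \<Longrightarrow> 0 \<le> ?pt s i"
    using pt_in ball_range by (meson less_imp_le)
  have bnnT: "0 \<le> birth_rate m S b ?pt d s" if "valid_policy m S d" for d s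
    by (rule birth_nonneg[OF that]) (use b0 ptn in auto)
  show ?thesis
  proof (intro conjI allI impI)
    show "in_class m S {a..b} ?P b ?pt" by (rule inc)
    fix Lam p s0
    assume cl: "in_class m S {a..b} ?P Lam p" and s0: "s0 \<le> S"
    have LamI: "a \<le> Lam" "Lam \<le> b" and pP: "\<And>s. s \<le> S \<Longrightarrow> p s \<in> ?P"
      using cl unfolding in_class_def by auto
    have Lam0: "0 \<le> Lam" using LamI Lmin_pos I_sub by simp
    have pn: "\<And>s i. s < S \<Longrightarrow> i \<in> {1..m} \<Longrightarrow> 0 \<le> p s i"
      using pP ball_range by (meson less_imp_le)
    have bnnO: "0 \<le> birth_rate m S Lam p d s" if "valid_policy m S d" for d s
      by (rule birth_nonneg[OF that]) (use Lam0 pn in auto)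
    define OR where "OR d = avg_reward m S c mu r Lam p d s0" for d
    define TR where "TR d = avg_reward m S c mu r b ?pt d s0" for d
    define K where "K = (\<Sum>s\<le>S. \<Sum>i=1..m. b * \<bar>r i s\<bar>)"
    have K0: "0 \<le> K" unfolding K_def using b0 by (intro sum_nonneg) auto
    have ne: "{d. valid_policy m S d} \<noteq> {}"
    proof -
      define d0 where "d0 s (a :: nat set) = (if a = {} then 1 else (0::real))" for s :: nat and a
      have "valid_policy m S d0" unfolding valid_policy_def d0_def
        by (simp add: sum.delta)
      then show ?thesis by blast
    qed
    have bdd: "bdd_above (TR ` {d. valid_policy m S d})"
    proof (rule bdd_aboveI)
      fix x assume "x \<in> TR ` {d. valid_policy m S d}"
      then obtain d where d: "valid_policy m S d" and x: "x = TR d" by blast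
      let ?Q = "generator m S c mu b ?pt d"
      note ch = avg_char[OF c_pos mu_pos s0, of m b ?pt d, OF bnnT[OF d]]
      obtain g h where pois: "\<forall>i\<le>S. (\<Sum>j\<le>S. ?Q i j * h j) = reward_rate m S r b ?pt d i - g"
        using ch(3) by blast
      have "TR d = g" unfolding TR_def by (rule ch(4)[OF pois])
      moreover have "g \<le> K"
      proof (rule avg_le[OF ch(1) ch(2) s0])
        show "\<And>i. i \<le> S \<Longrightarrow> (\<Sum>j\<le>S. ?Q i j * h j) = reward_rate m S r b ?pt d i - g"
          using pois by blast
        show "\<And>i. i \<le> S \<Longrightarrow> (\<Sum>j\<le>S. ?Q i j * 0) = K - K" by simp
        fix i assume i: "i \<le> S"
        show "reward_rate m S r b ?pt d i \<le> K"
        proof (cases "i < S")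
          case True
          have "reward_rate m S r b ?pt d i = (\<Sum>k\<in>{1..m}. (b * ?pt i k * r k i) * marg m d i k)"
            using True by (simp add: reward_formula)
          also have "\<dots> \<le> (\<Sum>k\<in>{1..m}. b * \<bar>r k i\<bar>)"
          proof (rule sum_mono)
            fix k assume k: "k \<in> {1..m}"
            have pr: "0 \<le> ?pt i k" "?pt i k \<le> 1" using ball_range[OF pt_in k] True by auto
            have mr: "0 \<le> marg m d i k" "marg m d i k \<le> 1" using marg_range[OF d True] by auto
            have "(b * ?pt i k * r k i) * marg m d i k \<le> \<bar>b * ?pt i k * r k i * marg m d i k\<bar>" by simp
            also have "\<dots> = b * \<bar>r k i\<bar> * (?pt i k * marg m d i k)"
              using pr mr b0 by (simp add: abs_mult)
            also have "\<dots> \<le> b * \<bar>r k i\<bar> * 1"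
              using pr mr b0 by (intro mult_left_mono mult_le_one) auto
            finally show "(b * ?pt i k * r k i) * marg m d i k \<le> b * \<bar>r k i\<bar>" by simp
          qed
          also have "\<dots> \<le> K" unfolding K_def
            by (rule member_le_sum[where f="\<lambda>s. \<Sum>k=1..m. b * \<bar>r k s\<bar>"])
               (use i b0 in \<open>auto intro: sum_nonneg\<close>)
          finally show ?thesis .
        qed (simp add: reward_formula K0)
      qed
      ultimately show "x \<le> K" using x by simp
    qed
    have key: "\<exists>d'\<in>{d. valid_policy m S d}. OR d \<le> TR d'" if d: "valid_policy m S d" for d
    proof -
      have ex: "\<forall>s. \<exists>y. s < S \<longrightarrow> (\<forall>i\<in>{1..m}. 0 \<le> y i \<and> y i \<le> 1)
          \<and> (\<Sum>i=1..m. y i * (b * ?pt s i)) = (\<Sum>i=1..m. marg m d s i * (Lam * p s i))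
          \<and> (\<Sum>i=1..m. marg m d s i * (Lam * p s i) * r i s) \<le> (\<Sum>i=1..m. y i * (b * ?pt s i) * r i s)"
      proof
        fix s
        show "\<exists>y. s < S \<longrightarrow> (\<forall>i\<in>{1..m}. 0 \<le> y i \<and> y i \<le> 1)
          \<and> (\<Sum>i=1..m. y i * (b * ?pt s i)) = (\<Sum>i=1..m. marg m d s i * (Lam * p s i))
          \<and> (\<Sum>i=1..m. marg m d s i * (Lam * p s i) * r i s) \<le> (\<Sum>i=1..m. y i * (b * ?pt s i) * r i s)"
        proof (cases "s < S")
          case True
          then have sS: "s \<le> S" by simp
          have "\<exists>y. (\<forall>i\<in>{1..m}. 0 \<le> y i \<and> y i \<le> 1)
              \<and> (\<Sum>i=1..m. y i * (b * ?pt s i)) = (\<Sum>i=1..m. marg m d s i * (Lam * p s i))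
              \<and> (\<Sum>i=1..m. marg m d s i * (Lam * p s i) * (\<lambda>i. r i s) i)
                 \<le> (\<Sum>i=1..m. y i * (b * ?pt s i) * (\<lambda>i. r i s) i)"
          proof (rule couple[OF ord_bij[OF sS]])
            show "\<And>k l. 1 \<le> k \<Longrightarrow> k \<le> l \<Longrightarrow> l \<le> m \<Longrightarrow> r (ord s l) s \<le> r (ord s k) s"
              by (rule sigma_order[OF sS])
            show "\<And>i. i \<in> {1..m} \<Longrightarrow> 0 \<le> Lam * p s i" using Lam0 pn[OF True] by simp
            show "\<And>i. i \<in> {1..m} \<Longrightarrow> 0 \<le> b * ?pt s i" using b0 ptn[OF True] by simp
            show "\<And>i. i \<in> {1..m} \<Longrightarrow> 0 \<le> marg m d s i \<and> marg m d s i \<le> 1"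
              using marg_range[OF d True] by blast
            fix j assume j: "j \<le> m"
            have sn: "0 \<le> (\<Sum>l=1..j. ?pt s (ord s l))"
              by (rule sum_nonneg) (use ptn[OF True] bij_betw_apply[OF ord_bij[OF sS]] j in auto)
            have "(\<Sum>l=1..j. Lam * p s (ord s l)) = Lam * (\<Sum>l=1..j. p s (ord s l))"
              by (simp add: sum_distrib_left)
            also have "\<dots> \<le> Lam * (\<Sum>l=1..j. ?pt s (ord s l))"
              by (rule mult_left_mono[OF pt_pref[OF sS pP[OF sS] j] Lam0])
            also have "\<dots> \<le> b * (\<Sum>l=1..j. ?pt s (ord s l))"
              by (rule mult_right_mono[OF LamI(2) sn])
            also have "\<dots> = (\<Sum>l=1..j. b * ?pt s (ord s l))" by (simp add: sum_distrib_left)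
            finally show "(\<Sum>l=1..j. Lam * p s (ord s l)) \<le> (\<Sum>l=1..j. b * ?pt s (ord s l))" .
          qed
          then show ?thesis by simp
        qed simp
      qed
      from choice[OF ex] obtain Y where Y': "\<forall>s. s < S \<longrightarrow> (\<forall>i\<in>{1..m}. 0 \<le> Y s i \<and> Y s i \<le> 1)
          \<and> (\<Sum>i=1..m. Y s i * (b * ?pt s i)) = (\<Sum>i=1..m. marg m d s i * (Lam * p s i))
          \<and> (\<Sum>i=1..m. marg m d s i * (Lam * p s i) * r i s) \<le> (\<Sum>i=1..m. Y s i * (b * ?pt s i) * r i s)" ..
      have Y: "(\<forall>i\<in>{1..m}. 0 \<le> Y s i \<and> Y s i \<le> 1)
          \<and> (\<Sum>i=1..m. Y s i * (b * ?pt s i)) = (\<Sum>i=1..m. marg m d s i * (Lam * p s i))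
          \<and> (\<Sum>i=1..m. marg m d s i * (Lam * p s i) * r i s) \<le> (\<Sum>i=1..m. Y s i * (b * ?pt s i) * r i s)"
        if "s < S" for s
        using Y' that by blast
      define d' where "d' s a = (if a \<subseteq> {1..m} then pdist {1..m} (Y s) a else 0)" for s a
      have f1: "0 \<le> d' s a" if s: "s < S" for s a unfolding d'_def
        using Y[OF s] by (auto intro!: pdist_nonneg)
      have f2: "d' s a \<noteq> 0 \<longrightarrow> a \<subseteq> {1..m}" for s a unfolding d'_def by auto
      have f3: "(\<Sum>a\<in>Pow {1..m}. d' s a) = 1" for s
      proof -
        have "(\<Sum>a\<in>Pow {1..m}. d' s a) = (\<Sum>a\<in>Pow {1..m}. pdist {1..m} (Y s) a)"
          by (rule sum.cong) (auto simp: d'_def)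
        then show ?thesis by (simp add: pdist_sum)
      qed
      have d'v: "valid_policy m S d'"
        unfolding valid_policy_def using f1 f2 f3 by blast
      have margd': "marg m d' s i = Y s i" if "i \<in> {1..m}" for s i
      proof -
        have "marg m d' s i = (\<Sum>a\<in>Pow {1..m}. if i \<in> a then pdist {1..m} (Y s) a else 0)"
          unfolding marg_def by (rule sum.cong) (auto simp: d'_def)
        then show ?thesis using pdist_marg[OF _ that] by simp
      qed
      have beq: "birth_rate m S b ?pt d' s = birth_rate m S Lam p d s" for s
      proof (cases "s < S")
        case True
        have "birth_rate m S b ?pt d' s = (\<Sum>i=1..m. (b * ?pt s i) * marg m d' s i)"
          using True by (simp add: birth_formula)
        also have "\<dots> = (\<Sum>i=1..m. Y s i * (b * ?pt s i))"
          by (rule sum.cong[OF refl]) (simp add: margd')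
        also have "\<dots> = (\<Sum>i=1..m. marg m d s i * (Lam * p s i))" using Y[OF True] by blast
        also have "\<dots> = birth_rate m S Lam p d s"
          using True by (simp add: birth_formula mult.commute)
        finally show ?thesis .
      qed (simp add: birth_rate_def)
      have req: "reward_rate m S r Lam p d s \<le> reward_rate m S r b ?pt d' s" for s
      proof (cases "s < S")
        case True
        have "reward_rate m S r Lam p d s = (\<Sum>i=1..m. marg m d s i * (Lam * p s i) * r i s)"
          using True by (simp add: reward_formula algebra_simps)
        also have "\<dots> \<le> (\<Sum>i=1..m. Y s i * (b * ?pt s i) * r i s)" using Y[OF True] by blast
        also have "\<dots> = (\<Sum>i=1..m. (b * ?pt s i * r i s) * marg m d' s i)"
          by (rule sum.cong[OF refl]) (simp add: margd')
        also have "\<dots> = reward_rate m S r b ?pt d' s"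
          using True by (simp add: reward_formula)
        finally show ?thesis .
      qed (simp add: reward_rate_def)
      have geq: "generator m S c mu b ?pt d' = generator m S c mu Lam p d"
        by (intro ext) (simp add: generator_def beq)
      note chO = avg_char[OF c_pos mu_pos s0, of m Lam p d, OF bnnO[OF d]]
      note chT = avg_char[OF c_pos mu_pos s0, of m b ?pt d', OF bnnT[OF d'v]]
      obtain g1 h1 where p1: "\<forall>i\<le>S. (\<Sum>j\<le>S. generator m S c mu Lam p d i j * h1 j) = reward_rate m S r Lam p d i - g1"
        using chO(3) by blast
      obtain g2 h2 where p2: "\<forall>i\<le>S. (\<Sum>j\<le>S. generator m S c mu b ?pt d' i j * h2 j) = reward_rate m S r b ?pt d' i - g2"
        using chT(3) by blast
      have "OR d = g1" unfolding OR_def by (rule chO(4)[OF p1])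
      moreover have "TR d' = g2" unfolding TR_def by (rule chT(4)[OF p2])
      moreover have "g1 \<le> g2"
      proof (rule avg_le[OF chO(1) chO(2) s0])
        show "\<And>i. i \<le> S \<Longrightarrow> (\<Sum>j\<le>S. generator m S c mu Lam p d i j * h1 j) = reward_rate m S r Lam p d i - g1"
          using p1 by blast
        show "\<And>i. i \<le> S \<Longrightarrow> (\<Sum>j\<le>S. generator m S c mu Lam p d i j * h2 j) = reward_rate m S r b ?pt d' i - g2"
          using p2 unfolding geq by blast
        show "\<And>i. i \<le> S \<Longrightarrow> reward_rate m S r Lam p d i \<le> reward_rate m S r b ?pt d' i"
          by (rule req)
      qed
      ultimately show ?thesis using d'v by auto
    qed
    have "(SUP d\<in>{d. valid_policy m S d}. OR d) \<le> (SUP d\<in>{d. valid_policy m S d}. TR d)"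
      by (rule cSUP_mono[OF ne bdd]) (use key in blast)
    then show "opt_reward m S c mu r Lam p s0 \<le> opt_reward m S c mu r b ?pt s0"
      unfolding opt_reward_def OR_def TR_def .
  qed
qed

end
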